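(* Let $r\ge 1$, $n\ge 1$ and $k\ge 0$ be integers and let $s:[n]\to\{0,1,\dots,r\}$. The simplicial complex $C_s(n,k,\dots,k)$ (with $k$ repeated $r$ times) is non-empty if and only if $\sum_{i=1}^n s(i)\ge rk$.
   Context: For $\mathbf{k}=(k_1,\dots,k_r)$ with $k_i\ge 0$ and $s:[n]\to\{0,\dots,r\}$, the complex $C_s(n,\mathbf{k})$ has as vertices the $r$-tuples $(A_1,\dots,A_r)$ of subsets of $[n]$ such that $|A_j|\ge k_j$ for all $j$ and, for each $x\in[n]$, the number of $1\le j\le r$ with $x\in A_j$ is exactly $s(x)$. A set of vertices $\{(A_1^i,\dots,A_r^i)\}_{i\in I}$ is a face iff $|\bigcap_{i\in I}A_j^i|\ge k_j$ for all $j=1,\dots,r$. Non-empty means it has at least one vertex. *)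

theory Defs
  imports Main
begin

text \<open>An r-tuple (A_1,...,A_r) of subsets of [n] is represented as a function
  A :: nat \<Rightarrow> nat set, with A j meaningful for j in {1..r} and A j = {} otherwise.
  The vector k = (k_1,...,k_r) is a function kk :: nat \<Rightarrow> nat (used on {1..r}),
  and s :: nat \<Rightarrow> nat is used on [n] = {1..n}.\<close>

definition Cs_vertices :: "nat \<Rightarrow> nat \<Rightarrow> (nat \<Rightarrow> nat) \<Rightarrow> (nat \<Rightarrow> nat) \<Rightarrow> (nat \<Rightarrow> nat set) set" where
  "Cs_vertices r n kk s =
     {A. (\<forall>j\<in>{1..r}. A j \<subseteq> {1..n} \<and> card (A j) \<ge> kk j)
       \<and> (\<forall>j. j \<notin> {1..r} \<longrightarrow> A j = {})
       \<and> (\<forall>x\<in>{1..n}. card {j\<in>{1..r}. x \<in> A j} = s x)}"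

definition Cs_faces :: "nat \<Rightarrow> nat \<Rightarrow> (nat \<Rightarrow> nat) \<Rightarrow> (nat \<Rightarrow> nat) \<Rightarrow> (nat \<Rightarrow> nat set) set set" where
  "Cs_faces r n kk s =
     {F. F \<subseteq> Cs_vertices r n kk s \<and>
         (F \<noteq> {} \<longrightarrow> (\<forall>j\<in>{1..r}. card (\<Inter>A\<in>F. A j) \<ge> kk j))}"

definition Cs_nonempty :: "nat \<Rightarrow> nat \<Rightarrow> (nat \<Rightarrow> nat) \<Rightarrow> (nat \<Rightarrow> nat) \<Rightarrow> bool" where
  "Cs_nonempty r n kk s \<longleftrightarrow> (\<exists>v. {v} \<in> Cs_faces r n kk s)"

end

theory Submission
  imports Defs
begin

lemma card_filter_sum:
  "finite J \<Longrightarrow> card {j\<in>J. P j} = (\<Sum>j\<in>J. if P j then 1 else 0::nat)"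
  proof -
  assume f: "finite J"
  have "{j\<in>J. P j} = J \<inter> Collect P" by auto
  then show ?thesis using f by (simp add: sum.If_cases)
qed

lemma double_count:
  assumes "finite X" "finite J"
  shows "(\<Sum>x\<in>X. card {j\<in>J. x \<in> A j}) = (\<Sum>j\<in>J. card (A j \<inter> X))"
proof -
  have "(\<Sum>x\<in>X. card {j\<in>J. x \<in> A j}) = (\<Sum>x\<in>X. \<Sum>j\<in>J. if x \<in> A j then 1 else 0::nat)"
    using assms by (simp add: card_filter_sum)
  also have "\<dots> = (\<Sum>j\<in>J. \<Sum>x\<in>X. if x \<in> A j then 1 else 0::nat)"
    by (rule sum.swap)
  also have "\<dots> = (\<Sum>j\<in>J. card (A j \<inter> X))"
    using assms by (simp add: sum.If_cases Int_commute)
  finally show ?thesis .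
qed

lemma nec:
  assumes "A \<in> Cs_vertices r n (\<lambda>_. k) s"
  shows "(\<Sum>i=1..n. s i) \<ge> r * k"
proof -
  have v: "\<forall>j\<in>{1..r}. A j \<subseteq> {1..n} \<and> card (A j) \<ge> k"
     "\<forall>x\<in>{1..n}. card {j\<in>{1..r}. x \<in> A j} = s x"
    using assms unfolding Cs_vertices_def by auto
  have "(\<Sum>i=1..n. s i) = (\<Sum>x\<in>{1..n}. card {j\<in>{1..r}. x \<in> A j})"
    using v(2) by simp
  also have "\<dots> = (\<Sum>j\<in>{1..r}. card (A j \<inter> {1..n}))"
    by (rule double_count) auto
  also have "\<dots> = (\<Sum>j\<in>{1..r}. card (A j))"
    using v(1) by (intro sum.cong) (auto simp: Int_absorb2)
  also have "\<dots> \<ge> (\<Sum>j\<in>{1..r}. k)"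
    using v(1) by (intro sum_mono) auto
  finally show ?thesis by simp
qed

lemma suff:
  "\<forall>s. (\<forall>x\<in>{1..n}. s x \<le> r) \<longrightarrow> (\<Sum>i=1..n. s i) \<ge> r * k
     \<longrightarrow> (\<exists>A. A \<in> Cs_vertices r n (\<lambda>_. k) s)"
proof (induction r)
  case 0
  show ?case
  proof (intro allI impI)
    fix s :: "nat \<Rightarrow> nat" assume "\<forall>x\<in>{1..n}. s x \<le> 0"
    then show "\<exists>A. A \<in> Cs_vertices 0 n (\<lambda>_. k) s"
      by (intro exI[of _ "\<lambda>_. {}"]) (auto simp: Cs_vertices_def)
  qed
next
  case (Suc r)
  show ?case
  proof (intro allI impI)
    fix s :: "nat \<Rightarrow> nat"
    assume sle: "\<forall>x\<in>{1..n}. s x \<le> Suc r" and S: "(\<Sum>i=1..n. s i) \<ge> Suc r * k"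
    define C where "C = {x\<in>{1..n}. s x = Suc r}"
    define D where "D = {x\<in>{1..n}. s x \<ge> 1}"
    define m where "m = card C"
    define N where "N = max k m"
    define SS where "SS = (\<Sum>i=1..n. s i)"
    have CD: "C \<subseteq> D" unfolding C_def D_def by auto
    have fD: "finite D" "finite C" unfolding C_def D_def by auto
    have "SS = (\<Sum>i\<in>D. s i)"
      unfolding SS_def D_def by (intro sum.mono_neutral_right) auto
    also have "\<dots> \<le> (\<Sum>i\<in>D. Suc r)"
      using sle by (intro sum_mono) (auto simp: D_def)
    finally have SD: "SS \<le> Suc r * card D" by (simp add: mult.commute)
    have "(\<Sum>i\<in>C. s i) \<le> SS"
      unfolding SS_def C_def by (intro sum_mono2) auto
    moreover have "(\<Sum>i\<in>C. s i) = Suc r * m"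
      unfolding m_def by (simp add: C_def)
    ultimately have Sm: "Suc r * m \<le> SS" by simp
    have S': "Suc r * k \<le> SS" using S SS_def by simp
    have kD: "k \<le> card D"
      proof -
      have "Suc r * k \<le> Suc r * card D" using SD S' by linarith
      then show ?thesis by (simp only: Suc_mult_le_cancel1)
    qed
    have mD: "m \<le> card D" unfolding m_def using CD fD by (simp add: card_mono)
    have ND: "N \<le> card D" using kD mD N_def by simp
    have NS: "r * k + N \<le> SS"
    proof (cases "k \<le> m")
      case True
      have rk: "r * k \<le> r * m" using True by (rule mult_le_mono2)
      have "N = m" using True N_def by simp
      moreover have "Suc r * m = r * m + m" by simp
      ultimately show ?thesis using Sm rk by linarith
    next
      case False
      then show ?thesis using S' N_def by simp
    qed
    have "card (D - C) = card D - m" using CD fD m_def by (simp add: card_Diff_subset)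
    then have "N - m \<le> card (D - C)" using ND by simp
    then obtain E where E: "E \<subseteq> D - C" "card E = N - m"
      by (rule obtain_subset_with_card_n)
    define B where "B = C \<union> E"
    have fE: "finite E" using E fD finite_subset by blast
    have cB: "card B = N" unfolding B_def using E fE fD m_def N_def
      by (subst card_Un_disjoint) auto
    have BD: "B \<subseteq> D" "C \<subseteq> B" using E CD unfolding B_def by auto
    define s' where "s' = (\<lambda>x. s x - (if x \<in> B then 1 else 0))"
    have s'le: "\<forall>x\<in>{1..n}. s' x \<le> r"
      using sle BD unfolding s'_def C_def by fastforce
    have split: "(\<Sum>i=1..n. s i) = (\<Sum>i=1..n. s' i) + (\<Sum>i=1..n. if i \<in> B then 1 else 0)"
      unfolding sum.distrib[symmetric] s'_def
      using BD by (intro sum.cong) (auto simp: D_def)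
    have "(\<Sum>i=1..n. if i \<in> B then 1 else (0::nat)) = card ({1..n} \<inter> B)"
      by (simp add: sum.If_cases)
    also have "\<dots> = card B" proof -
      have "{1..n} \<inter> B = B" using BD D_def by blast
      then show ?thesis by simp
    qed
    finally have "(\<Sum>i=1..n. s' i) = SS - N" using split SS_def cB by simp
    then have "(\<Sum>i=1..n. s' i) \<ge> r * k" using NS by simp
    then obtain A' where A': "A' \<in> Cs_vertices r n (\<lambda>_. k) s'"
      using Suc.IH s'le by blast
    have A'v: "\<forall>j\<in>{1..r}. A' j \<subseteq> {1..n} \<and> card (A' j) \<ge> k"
      "\<forall>j. j \<notin> {1..r} \<longrightarrow> A' j = {}"
      "\<forall>x\<in>{1..n}. card {j\<in>{1..r}. x \<in> A' j} = s' x"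
      using A' unfolding Cs_vertices_def by auto
    define A where "A = A'(Suc r := B)"
    have "A \<in> Cs_vertices (Suc r) n (\<lambda>_. k) s"
      unfolding Cs_vertices_def
    proof (intro CollectI conjI ballI allI impI)
      fix j assume j: "j \<in> {1..Suc r}"
      show "A j \<subseteq> {1..n}"
        using j A'v(1) BD D_def by (cases "j = Suc r") (auto simp: A_def)
      show "k \<le> card (A j)"
        using j A'v(1) cB N_def by (cases "j = Suc r") (auto simp: A_def)
    next
      fix j assume "j \<notin> {1..Suc r}"
      then show "A j = {}" using A'v(2) by (auto simp: A_def)
    next
      fix x assume x: "x \<in> {1..n}"
      have eq: "{j\<in>{1..Suc r}. x \<in> A j} = {j\<in>{1..r}. x \<in> A' j} \<union> (if x \<in> B then {Suc r} else {})"
        by (auto simp: A_def)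
      have "card {j\<in>{1..Suc r}. x \<in> A j} = card {j\<in>{1..r}. x \<in> A' j} + (if x \<in> B then 1 else 0)"
        unfolding eq by (subst card_Un_disjoint) auto
      also have "\<dots> = s x" using A'v(3) x BD unfolding s'_def D_def by auto
      finally show "card {j\<in>{1..Suc r}. x \<in> A j} = s x" .
    qed
    then show "\<exists>A. A \<in> Cs_vertices (Suc r) n (\<lambda>_. k) s" by blast
  qed
qed

theorem mainTheorem4:
  fixes r n k :: nat and s :: "nat \<Rightarrow> nat"
  assumes "r \<ge> 1" and "n \<ge> 1"
    and "\<forall>i\<in>{1..n}. s i \<le> r"
  shows "Cs_nonempty r n (\<lambda>_. k) s \<longleftrightarrow> (\<Sum>i=1..n. s i) \<ge> r * k"
proof -
  have "Cs_nonempty r n (\<lambda>_. k) s \<longleftrightarrow> (\<exists>v. v \<in> Cs_vertices r n (\<lambda>_. k) s)"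
    unfolding Cs_nonempty_def Cs_faces_def Cs_vertices_def by auto
  then show ?thesis using nec suff assms(3) by blast
qed

end
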